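(* If $S$ is a finite GCD closed set of positive integers and every element of $S$ generates a double-chain set in $S$, then the LCM matrix $[S]$ is invertible.
   Context: All order notions are with respect to divisibility, with meet $\gcd$; $S$ is GCD closed if $\gcd(x,y)\in S$ for all $x,y\in S$. The LCM matrix $[S]$ of $S=\{x_1,\dots,x_n\}$ has $(i,j)$ entry $\mathrm{lcm}(x_i,x_j)$. $C_S(x)$ is the set of elements of $S$ covered by $x$ in $(S,\mid)$; $\mathrm{meetcl}(C)$ is the set of gcds of all nonempty finite subsets of $C$. An element $x\in S$ generates a double-chain set in $S$ if $\mathrm{meetcl}(C_S(x))\setminus C_S(x)$ is a union of two disjoint (possibly empty) chains under divisibility. *)

theory Defs
  imports Main "Jordan_Normal_Form.Matrix"
begin

definition gcd_closed :: "nat set \<Rightarrow> bool" where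
  "gcd_closed S \<longleftrightarrow> (\<forall>x\<in>S. \<forall>y\<in>S. gcd x y \<in> S)"

text \<open>LCM matrix of S, with S listed in increasing order (invertibility does not depend
  on the ordering).\<close>
definition lcm_matrix :: "nat set \<Rightarrow> real mat" where
  "lcm_matrix S = (let xs = sorted_list_of_set S in
     mat (length xs) (length xs) (\<lambda>(i,j). real (lcm (xs ! i) (xs ! j))))"

definition covered_set :: "nat set \<Rightarrow> nat \<Rightarrow> nat set" where
  "covered_set S x = {y \<in> S. y dvd x \<and> y \<noteq> x \<and>
     \<not> (\<exists>z\<in>S. y dvd z \<and> z dvd x \<and> z \<noteq> y \<and> z \<noteq> x)}"

definition meetcl :: "nat set \<Rightarrow> nat set" where
  "meetcl C = {Gcd F | F. F \<subseteq> C \<and> finite F \<and> F \<noteq> {}}"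

definition dvd_chain :: "nat set \<Rightarrow> bool" where
  "dvd_chain A \<longleftrightarrow> (\<forall>a\<in>A. \<forall>b\<in>A. a dvd b \<or> b dvd a)"

definition generates_double_chain :: "nat set \<Rightarrow> nat \<Rightarrow> bool" where
  "generates_double_chain S x \<longleftrightarrow>
     (\<exists>A B. dvd_chain A \<and> dvd_chain B \<and> A \<inter> B = {} \<and>
        meetcl (covered_set S x) - covered_set S x = A \<union> B)"

end

theory Submission imports Defs "Jordan_Normal_Form.Determinant" begin

function gfun :: "nat \<Rightarrow> real" where
  "gfun n = (if n = 0 then 0 else 1 / real n - (\<Sum>d\<in>{d. d dvd n \<and> d < n}. gfun d))"
  by auto
termination by (relation "measure id") auto
declare gfun.simps[simp del]

lemma gfun_sum: assumes "n > 0" shows "(\<Sum>d\<in>{d. d dvd n}. gfun d) = 1 / real n"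
proof -
  have fin: "finite {d. d dvd n \<and> d < n}" using assms by auto
  have "{d. d dvd n} = insert n {d. d dvd n \<and> d < n}"
    using assms by (auto dest: dvd_imp_le)
  hence "(\<Sum>d\<in>{d. d dvd n}. gfun d) = gfun n + (\<Sum>d\<in>{d. d dvd n \<and> d < n}. gfun d)"
    using fin by simp
  also have "gfun n = 1 / real n - (\<Sum>d\<in>{d. d dvd n \<and> d < n}. gfun d)"
    using assms by (subst gfun.simps) simp
  finally show ?thesis by simp
qed

definition H :: "nat \<Rightarrow> nat set \<Rightarrow> real" where
  "H y C = (\<Sum>d\<in>{d. d dvd y \<and> (\<forall>c\<in>C. \<not> d dvd c)}. gfun d)"

lemma H_empty: "y > 0 \<Longrightarrow> H y {} = 1 / real y"
  unfolding H_def using gfun_sum by simp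

lemma H_insert: assumes "y > 0" shows "H y (insert c C) = H y C - H (gcd y c) C"
proof -
  let ?A = "{d. d dvd y \<and> (\<forall>c\<in>C. \<not> d dvd c)}"
  let ?B = "{d. d dvd y \<and> (\<forall>c'\<in>insert c C. \<not> d dvd c')}"
  let ?G = "{d. d dvd gcd y c \<and> (\<forall>c\<in>C. \<not> d dvd c)}"
  have fin: "finite ?A" using assms by (auto intro: finite_subset[of _ "{d. d dvd y}"])
  have e: "?A = ?B \<union> ?G" by auto
  have d: "?B \<inter> ?G = {}" by auto
  have fB: "finite ?B" by (rule finite_subset[OF _ fin]) auto
  have fG: "finite ?G" by (rule finite_subset[OF _ fin]) auto
  have "sum gfun ?A = sum gfun ?B + sum gfun ?G"
    unfolding e by (rule sum.union_disjoint[OF fB fG d])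
  thus ?thesis unfolding H_def by simp
qed

lemma H_zero: assumes "e \<in> C" "z dvd e" shows "H z C = 0"
proof -
  have "{d. d dvd z \<and> (\<forall>c\<in>C. \<not> d dvd c)} = {}" using assms by (auto dest: dvd_trans)
  thus ?thesis unfolding H_def by (simp only: sum.empty)
qed

lemma H_single: assumes "y > 0" "d0 \<in> C" "\<forall>d\<in>C. gcd y d dvd gcd y d0"
  shows "H y C = 1 / real y - 1 / real (gcd y d0)"
proof -
  have "{d. d dvd y \<and> (\<forall>c\<in>C. \<not> d dvd c)} = {d. d dvd y \<and> (\<forall>c\<in>{d0}. \<not> d dvd c)}"
  proof safe
    fix d c assume "d dvd y" "\<forall>c\<in>{d0}. \<not> d dvd c" "c \<in> C" "d dvd c"
    hence "d dvd gcd y c" by simp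
    hence "d dvd gcd y d0" using assms(3) \<open>c\<in>C\<close> dvd_trans by blast
    thus False using \<open>\<forall>c\<in>{d0}. \<not> d dvd c\<close> by simp
  qed (use assms in auto)
  hence "H y C = H y {d0}" unfolding H_def by simp
  also have "\<dots> = 1 / real y - 1 / real (gcd y d0)"
    using H_insert[OF assms(1), of d0 "{}"] H_empty assms(1) by simp
  finally show ?thesis .
qed

definition no3 :: "nat set \<Rightarrow> bool" where
  "no3 C \<longleftrightarrow> (\<forall>a\<in>C. \<forall>b\<in>C. \<forall>c\<in>C. \<forall>d\<in>C. \<forall>e\<in>C. \<forall>f\<in>C.
     a \<noteq> b \<longrightarrow> c \<noteq> d \<longrightarrow> e \<noteq> f \<longrightarrow>
     (gcd a b dvd gcd c d \<or> gcd c d dvd gcd a b) \<or> (gcd a b dvd gcd e f \<or> gcd e f dvd gcd a b)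
     \<or> (gcd c d dvd gcd e f \<or> gcd e f dvd gcd c d))"

lemma no3_subset: "no3 C \<Longrightarrow> C' \<subseteq> C \<Longrightarrow> no3 C'"
  unfolding no3_def by blast

lemma key_choice:
  assumes "no3 C" "a \<in> C" "b \<in> C" "a \<noteq> b" "\<forall>c\<in>C. c > 0"
    and mx: "\<forall>c\<in>C. \<forall>d\<in>C. c \<noteq> d \<longrightarrow> gcd c d \<le> gcd a b"
  shows "(\<forall>e\<in>C. e \<noteq> a \<longrightarrow> gcd a e dvd gcd a b) \<or> (\<forall>f\<in>C. f \<noteq> b \<longrightarrow> gcd b f dvd gcd a b)"
proof (rule ccontr)
  assume "\<not> ?thesis"
  then obtain e f where e: "e \<in> C" "e \<noteq> a" "\<not> gcd a e dvd gcd a b"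
    and f: "f \<in> C" "f \<noteq> b" "\<not> gcd b f dvd gcd a b" by blast
  have pa: "a > 0" using assms by auto
  have pb: "b > 0" using assms by auto
  have n1: "\<not> gcd a b dvd gcd a e"
  proof
    assume h: "gcd a b dvd gcd a e"
    have "gcd a e > 0" using pa by simp
    hence "gcd a b \<le> gcd a e" using h dvd_imp_le by blast
    moreover have "gcd a e \<le> gcd a b" using mx e assms(2) by metis
    ultimately have "gcd a e = gcd a b" by simp
    thus False using e by simp
  qed
  have n2: "\<not> gcd a b dvd gcd b f"
  proof
    assume h: "gcd a b dvd gcd b f"
    have "gcd b f > 0" using pb by simp
    hence "gcd a b \<le> gcd b f" using h dvd_imp_le by blast
    moreover have "gcd b f \<le> gcd a b" using mx f assms(3) by metis
    ultimately have "gcd b f = gcd a b" by simp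
    thus False using f by simp
  qed
  from assms(1)[unfolded no3_def, rule_format, OF assms(2,3) assms(2) e(1) assms(3) f(1) assms(4) e(2)[symmetric] f(2)[symmetric]]
  have "gcd a e dvd gcd b f \<or> gcd b f dvd gcd a e" using n1 n2 e(3) f(3) by blast
  thus False
  proof
    assume "gcd a e dvd gcd b f"
    hence "gcd a e dvd b" by (meson dvd_trans gcd_dvd1)
    hence "gcd a e dvd gcd a b" by simp
    thus False using e by simp
  next
    assume "gcd b f dvd gcd a e"
    hence "gcd b f dvd a" by (meson dvd_trans gcd_dvd1)
    hence "gcd b f dvd gcd a b" by simp
    thus False using f by simp
  qed
qed


lemma step_remove:
  assumes x: "x > 0" and cC: "c \<in> C" and cx: "c dvd x" and cpos: "c > 0"
    and d0: "d0 \<in> C" "d0 \<noteq> c" and mx: "\<forall>d\<in>C - {c}. gcd c d dvd gcd c d0"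
    and nd: "\<not> c dvd d0"
  shows "H x C = H x (C - {c}) + (1 / real (gcd c d0) - 1 / real c)"
    and "1 / real (gcd c d0) - 1 / real c > 0"
proof -
  have "C = insert c (C - {c})" using cC by auto
  hence "H x C = H x (C - {c}) - H (gcd x c) (C - {c})"
    using H_insert[OF x, of c "C - {c}"] by simp
  moreover have "gcd x c = c" using cx by (simp add: gcd.commute gcd_nat.absorb1)
  moreover have "H c (C - {c}) = 1 / real c - 1 / real (gcd c d0)"
    by (rule H_single) (use cpos d0 mx in auto)
  ultimately show "H x C = H x (C - {c}) + (1 / real (gcd c d0) - 1 / real c)" by simp
  have gp: "gcd c d0 > 0" using cpos by simp
  have "gcd c d0 \<le> c" using cpos by (simp add: dvd_imp_le)
  moreover have "gcd c d0 \<noteq> c" using nd by (metis gcd_dvd2)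
  ultimately have "gcd c d0 < c" by simp
  hence "real (gcd c d0) < real c" by simp
  thus "1 / real (gcd c d0) - 1 / real c > 0" using gp
    by (simp add: frac_less2)
qed

lemma two_case:
  assumes x: "x > 0" and c: "c dvd x" "c \<noteq> x" and d: "d dvd x" "d \<noteq> x"
    and ncd: "\<not> c dvd d" and ndc: "\<not> d dvd c"
  shows "H x {c, d} > 0"
proof -
  have cp: "c > 0" using c x by (metis dvd_0_left_iff gr0I)
  have dp: "d > 0" using d x by (metis dvd_0_left_iff gr0I)
  have "H x {c, d} = H x {d} - H (gcd x c) {d}" using H_insert[OF x, of c "{d}"] by simp
  also have "gcd x c = c" using c by (simp add: gcd.commute gcd_nat.absorb1)
  also have "H x {d} = 1 / real x - 1 / real d"
    using H_insert[OF x, of d "{}"] H_empty[OF x] H_empty[OF dp] by (simp add: gcd.commute gcd_nat.absorb1 d)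
  also have "H c {d} = 1 / real c - 1 / real (gcd c d)"
    using H_insert[OF cp, of d "{}"] H_empty cp by simp
  finally have eq: "H x {c, d} = 1 / real x + (1 / real (gcd c d) - 1 / real c - 1 / real d)" by simp
  define g where "g = gcd c d"
  have gp: "g > 0" using cp g_def by simp
  obtain u where u: "c = g * u" using g_def by (metis gcd_dvd1 dvdE)
  obtain v where v: "d = g * v" using g_def by (metis gcd_dvd2 dvdE)
  have "u \<noteq> 1" using u ncd g_def by (metis gcd_dvd2 mult.right_neutral)
  moreover have "u \<noteq> 0" using u cp by auto
  ultimately have u2: "u \<ge> 2" by linarith
  have "v \<noteq> 1" using v ndc g_def by (metis gcd_dvd1 mult.right_neutral)
  moreover have "v \<noteq> 0" using v dp by auto
  ultimately have v2: "v \<ge> 2" by linarith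
  have "real g * 2 \<le> real g * real u" by (rule mult_left_mono) (use u2 in auto)
  hence "real c \<ge> 2 * real g" using u by simp
  hence c1: "1 / real c \<le> 1 / (2 * real g)" using gp by (simp add: frac_le)
  have "real g * 2 \<le> real g * real v" by (rule mult_left_mono) (use v2 in auto)
  hence "real d \<ge> 2 * real g" using v by simp
  hence d1: "1 / real d \<le> 1 / (2 * real g)" using gp by (simp add: frac_le)
  have "1 / real x > 0" using x by simp
  moreover have "1 / real g - 1 / real c - 1 / real d \<ge> 0" using c1 d1 by simp
  ultimately show ?thesis unfolding eq g_def by linarith
qed


lemma H_pos:
  assumes "finite C" "x > 0" "\<forall>c\<in>C. c dvd x \<and> c \<noteq> x"
    "\<forall>c\<in>C. \<forall>d\<in>C. c dvd d \<longrightarrow> c = d" "no3 C" "card C \<ge> 2"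
  shows "H x C > 0"
  using assms
proof (induction "card C" arbitrary: C rule: less_induct)
  case less
  note fin = less.prems(1) and xp = less.prems(2) and cx = less.prems(3)
    and ac = less.prems(4) and n3 = less.prems(5) and c2 = less.prems(6)
  have pos: "\<forall>c\<in>C. c > 0" using cx xp dvd_pos_nat by blast
  show ?case
  proof (cases "card C = 2")
    case True
    then obtain c d where C: "C = {c, d}" "c \<noteq> d" by (auto simp: card_2_iff)
    have cC: "c \<in> C" "d \<in> C" using C(1) by auto
    have "\<not> c dvd d" using ac cC C(2) by blast
    moreover have "\<not> d dvd c" using ac cC C(2) by blast
    moreover have "c dvd x" "c \<noteq> x" "d dvd x" "d \<noteq> x" using cx cC by auto
    ultimately show ?thesis unfolding C(1) using two_case[OF xp] by blast
  next
    case False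
    hence c3: "card C \<ge> 3" using c2 by linarith
    have rem: "H x C > 0" if c: "c \<in> C" and d0: "d0 \<in> C" "d0 \<noteq> c"
        and mx: "\<forall>d\<in>C - {c}. gcd c d dvd gcd c d0" for c d0
    proof -
      have nd: "\<not> c dvd d0" using ac c d0 by metis
      have e1: "H x C = H x (C - {c}) + (1 / real (gcd c d0) - 1 / real c)"
        and e2: "1 / real (gcd c d0) - 1 / real c > 0"
        using step_remove[OF xp c _ _ d0 mx nd] cx pos c by auto
      have cc: "card (C - {c}) = card C - 1" using c fin by simp
      have "H x (C - {c}) > 0"
      proof (rule less.hyps)
        show "card (C - {c}) < card C" using cc c3 by simp
        show "no3 (C - {c})" using n3 no3_subset by blast
        show "2 \<le> card (C - {c})" using cc c3 by simp
      qed (use fin xp cx ac in auto)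
      thus ?thesis using e1 e2 by simp
    qed
    obtain p where p: "(\<lambda>(a,b). a \<in> C \<and> b \<in> C \<and> a \<noteq> b) p"
      and pm: "\<forall>q. (\<lambda>(a,b). a \<in> C \<and> b \<in> C \<and> a \<noteq> b) q \<longrightarrow> (\<lambda>(a,b). gcd a b) q \<le> (\<lambda>(a,b). gcd a b) p"
    proof -
      obtain a where a: "a \<in> C" using c3 by fastforce
      have "card (C - {a}) \<ge> 2" using a fin c3 by simp
      then have "C - {a} \<noteq> {}" by (metis card.empty not_numeral_le_zero)
      then obtain b where b: "b \<in> C - {a}" by blast
      have ab: "a \<in> C" "b \<in> C" "a \<noteq> b" using a b by auto
      have "\<exists>p. (\<lambda>(a,b). a \<in> C \<and> b \<in> C \<and> a \<noteq> b) p \<and> (\<forall>q. (\<lambda>(a,b). a \<in> C \<and> b \<in> C \<and> a \<noteq> b) q \<longrightarrow> (\<lambda>(a,b). gcd a b) q \<le> (\<lambda>(a,b). gcd a b) p)"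
      proof (rule Lattices_Big.ex_has_greatest_nat[where k = "(a,b)" and b = "x + 1"])
        show "(\<lambda>(a,b). a \<in> C \<and> b \<in> C \<and> a \<noteq> b) (a, b)" using ab by simp
        show "\<forall>y. (\<lambda>(a,b). a \<in> C \<and> b \<in> C \<and> a \<noteq> b) y \<longrightarrow> (\<lambda>(a,b). gcd a b) y < x + 1"
        proof (intro allI impI)
          fix y :: "nat \<times> nat" assume "(\<lambda>(a,b). a \<in> C \<and> b \<in> C \<and> a \<noteq> b) y"
          then obtain u v where y: "y = (u,v)" "u \<in> C" by auto
          have "gcd u v \<le> u" using pos y by (simp add: dvd_imp_le)
          moreover have "u \<le> x" using cx y xp by (simp add: dvd_imp_le)
          ultimately show "(\<lambda>(a,b). gcd a b) y < x + 1" using y by simp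
        qed
      qed
      thus ?thesis using that by blast
    qed
    obtain a b where ab: "p = (a,b)" by (cases p)
    have a: "a \<in> C" and b: "b \<in> C" and anb: "a \<noteq> b" using p ab by auto
    have mx: "\<forall>c\<in>C. \<forall>d\<in>C. c \<noteq> d \<longrightarrow> gcd c d \<le> gcd a b"
      using pm ab by fastforce
    from key_choice[OF n3 a b anb pos mx]
    show ?thesis
    proof
      assume h: "\<forall>e\<in>C. e \<noteq> a \<longrightarrow> gcd a e dvd gcd a b"
      show ?thesis by (rule rem[OF a b]) (use h anb in auto)
    next
      assume h: "\<forall>f\<in>C. f \<noteq> b \<longrightarrow> gcd b f dvd gcd a b"
      show ?thesis by (rule rem[OF b a]) (use h anb in \<open>auto simp: gcd.commute\<close>)
    qed
  qed
qed


lemma H_nonzero: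
  assumes "finite C" "C \<noteq> {}" "x > 0" "\<forall>c\<in>C. c dvd x \<and> c \<noteq> x"
    "\<forall>c\<in>C. \<forall>d\<in>C. c dvd d \<longrightarrow> c = d" "no3 C"
  shows "H x C \<noteq> 0"
proof (cases "card C \<ge> 2")
  case True
  thus ?thesis using H_pos[OF assms(1,3,4,5,6)] by simp
next
  case False
  moreover have "card C > 0" using assms(1,2) by (simp add: card_gt_0_iff)
  ultimately have "card C = 1" by linarith
  then obtain c where C: "C = {c}" by (auto simp: card_1_singleton_iff)
  have cx: "c dvd x" "c \<noteq> x" using assms(4) C by auto
  have cp: "c > 0" using cx assms(3) dvd_pos_nat by blast
  have "c \<le> x" using cx assms(3) by (simp add: dvd_imp_le)
  hence lt: "real c < real x" using cx by simp
  have "H x C = 1 / real x - 1 / real c"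
    using H_insert[OF assms(3), of c "{}"] H_empty[OF assms(3)] H_empty[OF cp] C cx
    by (simp add: gcd.commute gcd_nat.absorb1)
  moreover have "1 / real x < 1 / real c" using lt cp by (simp add: frac_less2)
  ultimately show ?thesis by linarith
qed

lemma cover_exists:
  assumes "finite S" "w \<in> S" "z > 0" "w dvd z" "w \<noteq> z"
  shows "\<exists>c\<in>covered_set S z. w dvd c"
proof -
  define U where "U = {u\<in>S. w dvd u \<and> u dvd z \<and> u \<noteq> z}"
  have fU: "finite U" using assms(1) U_def by simp
  have wU: "w \<in> U" using assms U_def by simp
  define c where "c = Max U"
  have cU: "c \<in> U" using fU wU c_def Max_in by blast
  have cmax: "\<forall>u\<in>U. u \<le> c" using fU c_def by simp
  have "c \<in> covered_set S z"
    unfolding covered_set_def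
  proof (safe)
    show "c \<in> S" "c dvd z" using cU U_def by auto
    show "c = z \<Longrightarrow> False" using cU U_def by auto
    fix u assume u: "u \<in> S" "c dvd u" "u dvd z" "u \<noteq> c" "u \<noteq> z"
    have "w dvd u" using cU U_def u(2) dvd_trans by blast
    hence "u \<in> U" using u U_def by simp
    hence "u \<le> c" using cmax by simp
    moreover have "u > 0" using u(3) assms(3) dvd_pos_nat by blast
    hence "c \<le> u" using u(2) by (simp add: dvd_imp_le)
    ultimately show False using u(4) by simp
  qed
  moreover have "w dvd c" using cU U_def by simp
  ultimately show ?thesis by blast
qed

lemma mobius:
  assumes fin: "finite S" and pos: "\<forall>x\<in>S. x > 0" and gc: "gcd_closed S" and y: "y \<in> S"
  shows "(\<Sum>z\<in>{z\<in>S. z dvd y}. H z (covered_set S z)) = 1 / real y"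
proof -
  define Z where "Z = {z\<in>S. z dvd y}"
  define D where "D = (\<lambda>z. {d. d dvd z \<and> (\<forall>c\<in>covered_set S z. \<not> d dvd c)})"
  have fZ: "finite Z" using fin Z_def by simp
  have fD: "\<forall>z\<in>Z. finite (D z)"
  proof
    fix z assume "z \<in> Z"
    hence "z > 0" using pos Z_def by simp
    thus "finite (D z)" unfolding D_def by (rule finite_subset[rotated, OF finite_divisors_nat]) auto
  qed
  have "(\<Sum>z\<in>Z. H z (covered_set S z)) = (\<Sum>z\<in>Z. \<Sum>d\<in>D z. gfun d)"
    unfolding H_def D_def by simp
  also have "\<dots> = (\<Sum>(z,d)\<in>Sigma Z D. gfun d)"
    by (rule sum.Sigma[OF fZ fD])
  also have "\<dots> = (\<Sum>p\<in>Sigma Z D. gfun (snd p))"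
    by (simp add: case_prod_beta)
  also have "\<dots> = (\<Sum>d\<in>{d. d dvd y}. gfun d)"
  proof (rule sum.reindex_bij_betw)
    show "bij_betw snd (Sigma Z D) {d. d dvd y}"
      unfolding bij_betw_def
    proof (intro conjI)
      show "inj_on snd (Sigma Z D)"
      proof (rule inj_onI)
        fix p q assume p: "p \<in> Sigma Z D" and q: "q \<in> Sigma Z D" and e: "snd p = snd q"
        obtain z1 d where p': "p = (z1, d)" by (cases p)
        obtain z2 d' where q': "q = (z2, d')" by (cases q)
        have dd: "d' = d" using e p' q' by simp
        have z1: "z1 \<in> S" "d dvd z1" "\<forall>c\<in>covered_set S z1. \<not> d dvd c" "z1 > 0"
          using p p' Z_def D_def pos by auto
        have z2: "z2 \<in> S" "d dvd z2" "\<forall>c\<in>covered_set S z2. \<not> d dvd c" "z2 > 0"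
          using q q' dd Z_def D_def pos by auto
        define w where "w = gcd z1 z2"
        have wS: "w \<in> S" using gc z1 z2 w_def unfolding gcd_closed_def by blast
        have dw: "d dvd w" using z1 z2 w_def by simp
        have "w = z1"
        proof (rule ccontr)
          assume "w \<noteq> z1"
          then obtain c where "c \<in> covered_set S z1" "w dvd c"
            using cover_exists[OF fin wS z1(4)] w_def by auto
          thus False using z1(3) dw dvd_trans by blast
        qed
        moreover have "w = z2"
        proof (rule ccontr)
          assume "w \<noteq> z2"
          then obtain c where "c \<in> covered_set S z2" "w dvd c"
            using cover_exists[OF fin wS z2(4)] w_def by auto
          thus False using z2(3) dw dvd_trans by blast
        qed
        ultimately show "p = q" using p' q' dd by simp
      qed
      show "snd ` Sigma Z D = {d. d dvd y}"
      proof
        show "snd ` Sigma Z D \<subseteq> {d. d dvd y}"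
          using Z_def D_def dvd_trans by fastforce
        show "{d. d dvd y} \<subseteq> snd ` Sigma Z D"
        proof
          fix d assume "d \<in> {d. d dvd y}"
          hence dy: "d dvd y" by simp
          define T where "T = {z\<in>S. d dvd z \<and> z dvd y}"
          have fT: "finite T" using fin T_def by simp
          have yT: "y \<in> T" using y dy T_def by simp
          define z0 where "z0 = Min T"
          have z0T: "z0 \<in> T" using fT yT z0_def Min_in by blast
          have z0min: "\<forall>u\<in>T. z0 \<le> u" using fT z0_def by simp
          have "d \<in> D z0" unfolding D_def
          proof (safe)
            show "d dvd z0" using z0T T_def by simp
            fix c assume c: "c \<in> covered_set S z0" "d dvd c"
            have cS: "c \<in> S" "c dvd z0" "c \<noteq> z0" using c(1) unfolding covered_set_def by auto
            have "c dvd y" using cS z0T T_def dvd_trans by blast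
            hence "c \<in> T" using cS c(2) T_def by simp
            hence "z0 \<le> c" using z0min by simp
            moreover have "z0 > 0" using z0T T_def pos by simp
            hence "c \<le> z0" using cS by (simp add: dvd_imp_le)
            ultimately show False using cS by simp
          qed
          moreover have "z0 \<in> Z" using z0T T_def Z_def by simp
          ultimately show "d \<in> snd ` Sigma Z D" by force
        qed
      qed
    qed
  qed
  also have "\<dots> = 1 / real y" using gfun_sum y pos by simp
  finally show ?thesis unfolding Z_def .
qed


lemma sum_nth_set:
  assumes "distinct xs"
  shows "(\<Sum>k\<in>{0..<length xs}. h (xs ! k)) = (\<Sum>z\<in>set xs. h z)"
  using sum.reindex_bij_betw[OF bij_betw_nth[OF assms refl refl], of h]
  by (simp add: lessThan_atLeast0)

lemma matrix_identity:
  assumes fin: "finite S" and pos: "\<forall>x\<in>S. x > 0" and gc: "gcd_closed S"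
  defines "xs \<equiv> sorted_list_of_set S"
  defines "n \<equiv> length xs"
  defines "Dg \<equiv> mat n n (\<lambda>(i,j). if i = j then real (xs ! i) else 0)"
  defines "E \<equiv> mat n n (\<lambda>(i,k). if xs ! k dvd xs ! i then 1 else (0::real))"
  defines "F \<equiv> mat n n (\<lambda>(i,k). if xs ! k dvd xs ! i then H (xs ! k) (covered_set S (xs ! k)) else 0)"
  shows "lcm_matrix S = Dg * (F * transpose_mat E) * Dg"
proof -
  have dist: "distinct xs" and setxs: "set xs = S" using fin xs_def by auto
  have inS: "i < n \<Longrightarrow> xs ! i \<in> S" for i using setxs n_def nth_mem by blast
  let ?K = "F * transpose_mat E"
  have K: "?K $$ (i,j) = 1 / real (gcd (xs ! i) (xs ! j))" if ij: "i < n" "j < n" for i j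
  proof -
    have "?K $$ (i,j) = (\<Sum>k\<in>{0..<n}. F $$ (i,k) * E $$ (j,k))"
      using ij by (simp add: F_def E_def scalar_prod_def)
    also have "\<dots> = (\<Sum>k\<in>{0..<n}. (\<lambda>z. if z dvd gcd (xs ! i) (xs ! j) then H z (covered_set S z) else 0) (xs ! k))"
      by (rule sum.cong) (use ij in \<open>auto simp: F_def E_def\<close>)
    also have "\<dots> = (\<Sum>z\<in>S. if z dvd gcd (xs ! i) (xs ! j) then H z (covered_set S z) else 0)"
      using sum_nth_set[OF dist] setxs n_def by simp
    also have "\<dots> = (\<Sum>z\<in>{z\<in>S. z dvd gcd (xs ! i) (xs ! j)}. H z (covered_set S z))"
      by (simp add: sum.inter_filter[OF fin])
    also have "\<dots> = 1 / real (gcd (xs ! i) (xs ! j))"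
      by (rule mobius[OF fin pos gc]) (use gc inS ij in \<open>auto simp: gcd_closed_def\<close>)
    finally show ?thesis .
  qed
  have dK: "?K \<in> carrier_mat n n" unfolding carrier_mat_def F_def E_def by simp
  have dK2: "dim_row ?K = n" "dim_col ?K = n" using dK by auto
  show ?thesis
  proof (rule eq_matI)
    show "dim_row (lcm_matrix S) = dim_row (Dg * ?K * Dg)"
      "dim_col (lcm_matrix S) = dim_col (Dg * ?K * Dg)"
      by (simp_all add: lcm_matrix_def Let_def Dg_def xs_def n_def)
    fix i j assume "i < dim_row (Dg * ?K * Dg)" "j < dim_col (Dg * ?K * Dg)"
    hence ij: "i < n" "j < n" by (simp_all add: Dg_def)
    have DK: "(Dg * ?K) $$ (i,k) = real (xs ! i) * ?K $$ (i,k)" if k: "k < n" for k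
    proof -
      have "(Dg * ?K) $$ (i,k) = (\<Sum>l\<in>{0..<n}. Dg $$ (i,l) * ?K $$ (l,k))"
        using ij k dK2 by (simp add: Dg_def scalar_prod_def)
      also have "\<dots> = (\<Sum>l\<in>{0..<n}. if l = i then real (xs ! i) * ?K $$ (i,k) else 0)"
        by (rule sum.cong) (use ij in \<open>auto simp: Dg_def\<close>)
      also have "\<dots> = real (xs ! i) * ?K $$ (i,k)" using ij by simp
      finally show ?thesis .
    qed
    have "(Dg * ?K * Dg) $$ (i,j) = (\<Sum>l\<in>{0..<n}. (Dg * ?K) $$ (i,l) * Dg $$ (l,j))"
      using ij dK2 by (simp add: Dg_def scalar_prod_def)
    also have "\<dots> = (\<Sum>l\<in>{0..<n}. if l = j then real (xs ! i) * ?K $$ (i,j) * real (xs ! j) else 0)"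
      by (rule sum.cong) (use ij DK in \<open>auto simp: Dg_def\<close>)
    also have "\<dots> = real (xs ! i) * ?K $$ (i,j) * real (xs ! j)" using ij by simp
    also have "\<dots> = real (xs ! i) * real (xs ! j) / real (gcd (xs ! i) (xs ! j))"
      using K[OF ij] by simp
    also have "\<dots> = real (lcm (xs ! i) (xs ! j))"
    proof -
      have "gcd (xs ! i) (xs ! j) > 0" using pos inS ij by simp
      moreover have "real (xs ! i) * real (xs ! j) = real (gcd (xs ! i) (xs ! j)) * real (lcm (xs ! i) (xs ! j))"
        by (metis of_nat_mult prod_gcd_lcm_nat)
      ultimately show ?thesis by (simp add: field_simps)
    qed
    also have "\<dots> = lcm_matrix S $$ (i,j)"
      using ij by (simp add: lcm_matrix_def Let_def xs_def n_def)
    finally show "lcm_matrix S $$ (i,j) = (Dg * ?K * Dg) $$ (i,j)" by simp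
  qed
qed


lemma det_invertible:
  assumes A: "A \<in> carrier_mat n n" and d: "det A \<noteq> (0::real)"
  shows "invertible_mat A"
proof -
  from det_non_zero_imp_unit[OF A d, of "()"]
  obtain B where BA: "B * A = 1\<^sub>m n" and AB: "A * B = 1\<^sub>m n" and B: "B \<in> carrier_mat n n"
    unfolding Units_def ring_mat_def by auto
  show ?thesis unfolding invertible_mat_def inverts_mat_def square_mat.simps
    using A B AB BA by auto
qed

lemma prod_diag_nonzero:
  assumes "\<forall>i<dim_row A. A $$ (i,i) \<noteq> (0::real)"
  shows "prod_list (diag_mat A) \<noteq> 0"
  using assms by (auto simp: prod_list_zero_iff diag_mat_def)

lemma covered_props:
  assumes fin: "finite S" and x: "x \<in> S" and xp: "x > 0"
  defines "C \<equiv> covered_set S x"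
  shows "finite C" "\<forall>c\<in>C. c dvd x \<and> c \<noteq> x" "\<forall>c\<in>C. \<forall>d\<in>C. c dvd d \<longrightarrow> c = d"
    and "generates_double_chain S x \<Longrightarrow> no3 C"
proof -
  show "finite C" using fin unfolding C_def covered_set_def by simp
  show cx: "\<forall>c\<in>C. c dvd x \<and> c \<noteq> x" unfolding C_def covered_set_def by auto
  show ac: "\<forall>c\<in>C. \<forall>d\<in>C. c dvd d \<longrightarrow> c = d"
  proof (intro ballI impI)
    fix c d assume c: "c \<in> C" and d: "d \<in> C" and cd: "c dvd d"
    show "c = d"
    proof (rule ccontr)
      assume "c \<noteq> d"
      moreover have "d \<in> S" "d dvd x" "d \<noteq> x" using d unfolding C_def covered_set_def by auto
      ultimately show False using c cd unfolding C_def covered_set_def by blast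
    qed
  qed
  assume "generates_double_chain S x"
  then obtain A B where A: "dvd_chain A" and B: "dvd_chain B"
    and AB: "meetcl C - C = A \<union> B" unfolding generates_double_chain_def C_def by blast
  have inAB: "gcd a b \<in> A \<union> B" if a: "a \<in> C" and b: "b \<in> C" and ab: "a \<noteq> b" for a b
  proof -
    have "gcd a b = Gcd {a, b}" by simp
    hence "gcd a b \<in> meetcl C" unfolding meetcl_def using a b by blast
    moreover have "gcd a b \<notin> C"
    proof
      assume e: "gcd a b \<in> C"
      have "gcd a b \<noteq> a"
      proof
        assume "gcd a b = a"
        hence "a dvd b" by (metis gcd_dvd2)
        thus False using ac a b ab by blast
      qed
      moreover have "a \<in> S" "a dvd x" "a \<noteq> x" using a unfolding C_def covered_set_def by auto
      ultimately show False using e unfolding C_def covered_set_def by auto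
    qed
    ultimately show ?thesis using AB by blast
  qed
  show "no3 C" unfolding no3_def
  proof (intro ballI impI)
    fix a b c d e f assume "a \<in> C" "b \<in> C" "c \<in> C" "d \<in> C" "e \<in> C" "f \<in> C"
      "a \<noteq> b" "c \<noteq> d" "e \<noteq> f"
    hence u: "gcd a b \<in> A \<union> B" and v: "gcd c d \<in> A \<union> B" and w: "gcd e f \<in> A \<union> B"
      using inAB by auto
    show "(gcd a b dvd gcd c d \<or> gcd c d dvd gcd a b) \<or> (gcd a b dvd gcd e f \<or> gcd e f dvd gcd a b)
     \<or> (gcd c d dvd gcd e f \<or> gcd e f dvd gcd c d)"
      using u v w A B unfolding dvd_chain_def by blast
  qed
qed

theorem corollary4p3:
  fixes S :: "nat set"
  assumes "finite S"
    and "\<forall>x\<in>S. x > 0"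
    and "gcd_closed S"
    and "\<forall>x\<in>S. generates_double_chain S x"
  shows "invertible_mat (lcm_matrix S)"
proof -
  note fin = assms(1) and pos = assms(2) and gc = assms(3) and dc = assms(4)
  define xs where "xs = sorted_list_of_set S"
  define n where "n = length xs"
  define Dg where "Dg = mat n n (\<lambda>(i,j). if i = j then real (xs ! i) else 0)"
  define E where "E = mat n n (\<lambda>(i,k). if xs ! k dvd xs ! i then 1 else (0::real))"
  define F where "F = mat n n (\<lambda>(i,k). if xs ! k dvd xs ! i then H (xs ! k) (covered_set S (xs ! k)) else 0)"
  have M: "lcm_matrix S = Dg * (F * transpose_mat E) * Dg"
    using matrix_identity[OF fin pos gc] unfolding xs_def n_def Dg_def E_def F_def by simp
  have dist: "distinct xs" and setxs: "set xs = S" and srt: "sorted xs" using fin xs_def by auto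
  have inS: "i < n \<Longrightarrow> xs ! i \<in> S" for i using setxs n_def nth_mem by blast
  have ndvd: "\<not> xs ! k dvd xs ! i" if "i < k" "k < n" for i k
  proof
    assume h: "xs ! k dvd xs ! i"
    have "xs ! i \<le> xs ! k" using srt that n_def by (simp add: sorted_nth_mono)
    moreover have "xs ! i \<noteq> xs ! k" using dist that n_def nth_eq_iff_index_eq by fastforce
    moreover have "xs ! i > 0" using pos inS that by simp
    hence "xs ! k \<le> xs ! i" using h by (simp add: dvd_imp_le)
    ultimately show False by simp
  qed
  have cDg: "Dg \<in> carrier_mat n n" and cE: "E \<in> carrier_mat n n" and cF: "F \<in> carrier_mat n n"
    unfolding Dg_def E_def F_def by auto
  have cEt: "transpose_mat E \<in> carrier_mat n n" and cFt: "transpose_mat F \<in> carrier_mat n n"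
    using cE cF by auto
  have dDg: "det Dg \<noteq> 0"
  proof -
    have "upper_triangular Dg" unfolding upper_triangular_def Dg_def by auto
    hence "det Dg = prod_list (diag_mat Dg)" using det_upper_triangular cDg by blast
    moreover have "prod_list (diag_mat Dg) \<noteq> 0"
      by (rule prod_diag_nonzero) (use pos inS in \<open>auto simp: Dg_def\<close>)
    ultimately show ?thesis by simp
  qed
  have dEt: "det (transpose_mat E) \<noteq> 0"
  proof -
    have "upper_triangular (transpose_mat E)" unfolding upper_triangular_def E_def
      using ndvd by auto
    hence "det (transpose_mat E) = prod_list (diag_mat (transpose_mat E))"
      using det_upper_triangular cEt by blast
    moreover have "prod_list (diag_mat (transpose_mat E)) \<noteq> 0"
      by (rule prod_diag_nonzero) (auto simp: E_def)
    ultimately show ?thesis by simp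
  qed
  have dF: "det F \<noteq> 0"
  proof -
    have "upper_triangular (transpose_mat F)" unfolding upper_triangular_def F_def
      using ndvd by auto
    hence "det (transpose_mat F) = prod_list (diag_mat (transpose_mat F))"
      using det_upper_triangular cFt by blast
    moreover have "prod_list (diag_mat (transpose_mat F)) \<noteq> 0"
    proof (rule prod_diag_nonzero, intro allI impI)
      fix i assume "i < dim_row (transpose_mat F)"
      hence i: "i < n" using cF by simp
      define x where "x = xs ! i"
      have xS: "x \<in> S" and xp: "x > 0" using inS i pos x_def by auto
      have "H x (covered_set S x) \<noteq> 0"
      proof (cases "covered_set S x = {}")
        case True
        thus ?thesis using H_empty[OF xp] xp by simp
      next
        case False
        note cp = covered_props[OF fin xS xp]
        show ?thesis
          by (rule H_nonzero[OF cp(1) False xp cp(2) cp(3) cp(4)]) (use dc xS in blast)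
      qed
      thus "transpose_mat F $$ (i, i) \<noteq> 0" using i x_def by (simp add: F_def)
    qed
    ultimately show ?thesis using det_transpose[OF cF] by simp
  qed
  have "det (lcm_matrix S) = det Dg * (det F * det (transpose_mat E)) * det Dg"
    unfolding M using cDg cF cEt
    by (simp add: det_mult[of _ n] mult_carrier_mat[of _ n n _ n])
  hence "det (lcm_matrix S) \<noteq> 0" using dDg dF dEt by simp
  moreover have "lcm_matrix S \<in> carrier_mat n n"
    unfolding lcm_matrix_def Let_def xs_def n_def by simp
  ultimately show ?thesis by (rule det_invertible[rotated])
qed

end
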